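(* Under the standing setting, let $\mathcal{TV}_0(u)=|Du|_\nu(\Omega)+\int_{\partial\Omega}|T_\Omega u|\,d|D\chi_\Omega|_\nu$ for $u\in BV(\Omega,d,\nu)\cap L^2(\Omega,\nu)$ and $+\infty$ otherwise on $L^2(\Omega,\nu)$, and assume the Sobolev-type inequality: there is $C>0$ with $\|u\|_{L^2(\Omega,\nu)}\le C\,\mathcal{TV}_0(u)$ for all $u\in L^2(\Omega,\nu)$. Let $u_0\in L^2(\Omega,\nu)$ and let $u$ be the weak solution of the Dirichlet problem with boundary datum $f=0$ and initial datum $u_0$. Then $T_{ex}(u_0):=\inf\{T>0: u(t)=0\ \text{for all }t\ge T\}$ satisfies $$T_{ex}(u_0)\le\frac{\|u_0\|_{L^2(\Omega,\nu)}}{\lambda_1(\mathcal{TV}_0)},\qquad\lambda_1(\mathcal{TV}_0):=\inf\Big\{\frac{\mathcal{TV}_0(u)}{\|u\|_{L^2(\Omega,\nu)}}:u\in L^2(\Omega,\nu)\setminus\{0\}\Big\}>0.$$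
   Context: Standing setting: $(\mathbb{X},d)$ complete separable metric space, $\nu$ a doubling Radon measure, $\mathbb{X}$ supports a weak $(1,1)$-Poincaré inequality; $\mathcal{H}$ is the codimension-one Hausdorff measure; $\Omega$ is a bounded open regular domain (finite perimeter and $|D\chi_\Omega|_\nu(\mathbb{X})=\limsup_{t\to0}\nu(\Omega\setminus\Omega_t)/t$, $\Omega_t=\{x\in\Omega:\mathrm{dist}(x,\mathbb{X}\setminus\Omega)\ge t\}$) such that each of $U=\Omega$, $U=\mathbb{X}\setminus\overline\Omega$ supports a weak $(1,1)$-Poincaré inequality, satisfies $\nu(B(x,r)\cap U)\ge C\nu(B(x,r))$ for $\mathcal{H}$-a.e. $x\in\partial U$, $r\in(0,\mathrm{diam}\,U)$, and $C^{-1}\nu(B(x,r))/r\le\mathcal{H}(B(x,r)\cap\partial U)\le C\nu(B(x,r))/r$ for $x\in\partial U$, $r\in(0,\mathrm{diam}\,U)$. $|Du|_\nu$: total variation; $T_\Omega$: trace ($\lim_{r\to0}\frac{1}{\nu(\Omega\cap B(x,r))}\int_{\Omega\cap B(x,r)}|u-T_\Omega u(x)|d\nu=0$). The weak solution of the homogeneous Dirichlet problem with initial datum $u_0\in L^2(\Omega,\nu)$ is the unique strong solution $u$ of $u'(t)+\partial\mathcal{TV}_0(u(t))\ni0$, $u(0)=u_0$, where $\partial$ is the $L^2$-subdifferential. *)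

theory Defs
  imports "HOL-Analysis.Analysis"
begin

definition curve_len :: "(real \<Rightarrow> 'a::metric_space) \<Rightarrow> real \<Rightarrow> real \<Rightarrow> ennreal" where
  "curve_len \<gamma> s t =
     (SUP np \<in> {(n::nat, p::nat \<Rightarrow> real). p 0 = s \<and> p n = t \<and> (\<forall>i<n. p i \<le> p (Suc i))}.
        (\<Sum>i<fst np. ennreal (dist (\<gamma> (snd np i)) (\<gamma> (snd np (Suc i))))))"

definition arclength_param :: "(real \<Rightarrow> 'a::metric_space) \<Rightarrow> real \<Rightarrow> bool" where
  "arclength_param \<gamma> L \<longleftrightarrow> 0 \<le> L \<and>
     (\<forall>s t. 0 \<le> s \<and> s \<le> t \<and> t \<le> L \<longrightarrow> curve_len \<gamma> s t = ennreal (t - s))"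

definition upper_gradient_in :: "'a set \<Rightarrow> ('a::metric_space \<Rightarrow> real) \<Rightarrow> ('a \<Rightarrow> ennreal) \<Rightarrow> bool" where
  "upper_gradient_in U u g \<longleftrightarrow> g \<in> borel_measurable borel \<and>
     (\<forall>\<gamma> L. arclength_param \<gamma> L \<and> \<gamma> ` {0..L} \<subseteq> U \<longrightarrow>
        ennreal \<bar>u (\<gamma> 0) - u (\<gamma> L)\<bar> \<le> (\<integral>\<^sup>+ t. g (\<gamma> t) * indicator {0..L} t \<partial>lborel))"

text \<open>Weak (1,1)-Poincare inequality on the metric measure space (U, d, nu restricted to U),
  written in multiplied-out form (averages over balls B_U(x,r) = B(x,r) inter U).\<close>
definition poincare_11_on :: "'a::metric_space measure \<Rightarrow> 'a set \<Rightarrow> bool" where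
  "poincare_11_on \<nu> U \<longleftrightarrow> (\<exists>C>0. \<exists>lam\<ge>1. \<forall>x\<in>U. \<forall>r>0. \<forall>u g.
     u \<in> borel_measurable \<nu> \<and> (\<forall>y \<rho>. set_integrable \<nu> (ball y \<rho> \<inter> U) u) \<and> upper_gradient_in U u g \<longrightarrow>
     emeasure \<nu> (ball x (lam * r) \<inter> U) *
       (\<integral>\<^sup>+ y. ennreal \<bar>u y - (LINT z:ball x r \<inter> U|\<nu>. u z) / measure \<nu> (ball x r \<inter> U)\<bar>
               * indicator (ball x r \<inter> U) y \<partial>\<nu>)
     \<le> ennreal (C * r) * emeasure \<nu> (ball x r \<inter> U) *
       (\<integral>\<^sup>+ y. g y * indicator (ball x (lam * r) \<inter> U) y \<partial>\<nu>))"

text \<open>Locally finite (hence Radon on a Polish space) doubling Borel measure with positive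
  measure of balls.\<close>
definition doubling_radon :: "'a::metric_space measure \<Rightarrow> bool" where
  "doubling_radon \<nu> \<longleftrightarrow> sets \<nu> = sets borel \<and> space \<nu> = UNIV \<and>
     (\<forall>x r. r > 0 \<longrightarrow> 0 < emeasure \<nu> (ball x r) \<and> emeasure \<nu> (ball x r) < \<infinity>) \<and>
     (\<exists>C. \<forall>x r. r > 0 \<longrightarrow> emeasure \<nu> (ball x (2 * r)) \<le> ennreal C * emeasure \<nu> (ball x r))"

definition haus_R :: "'a::metric_space measure \<Rightarrow> real \<Rightarrow> 'a set \<Rightarrow> ennreal" where
  "haus_R \<nu> R A =
     (INF c \<in> {(I::nat set, x::nat \<Rightarrow> 'a, r::nat \<Rightarrow> real).
                 (\<forall>i\<in>I. 0 < r i \<and> r i \<le> R) \<and> A \<subseteq> (\<Union>i\<in>I. ball (x i) (r i))}.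
        (case c of (I, x, r) \<Rightarrow>
           (\<Sum>i. (if i \<in> I then emeasure \<nu> (ball (x i) (r i)) / ennreal (r i) else 0))))"

definition haus_codim1 :: "'a::metric_space measure \<Rightarrow> 'a set \<Rightarrow> ennreal" where
  "haus_codim1 \<nu> A = (SUP R \<in> {0<..}. haus_R \<nu> R A)"

definition ediam :: "'a::metric_space set \<Rightarrow> ereal" where
  "ediam U = (SUP x\<in>U. SUP y\<in>U. ereal (dist x y))"

definition lower_density_cond :: "'a::metric_space measure \<Rightarrow> 'a set \<Rightarrow> bool" where
  "lower_density_cond \<nu> U \<longleftrightarrow> (\<exists>C>0. \<exists>N. haus_codim1 \<nu> N = 0 \<and>
     (\<forall>x \<in> frontier U - N. \<forall>r. 0 < r \<and> ereal r < ediam U \<longrightarrow>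
        ennreal C * emeasure \<nu> (ball x r) \<le> emeasure \<nu> (ball x r \<inter> U)))"

definition codim1_ahlfors :: "'a::metric_space measure \<Rightarrow> 'a set \<Rightarrow> bool" where
  "codim1_ahlfors \<nu> U \<longleftrightarrow> (\<exists>C>0. \<forall>x \<in> frontier U. \<forall>r. 0 < r \<and> ereal r < ediam U \<longrightarrow>
     ennreal (1 / C) * emeasure \<nu> (ball x r) / ennreal r \<le> haus_codim1 \<nu> (ball x r \<inter> frontier U) \<and>
     haus_codim1 \<nu> (ball x r \<inter> frontier U) \<le> ennreal C * emeasure \<nu> (ball x r) / ennreal r)"

definition boundary_regular :: "'a::metric_space measure \<Rightarrow> 'a set \<Rightarrow> bool" where
  "boundary_regular \<nu> U \<longleftrightarrow> poincare_11_on \<nu> U \<and> lower_density_cond \<nu> U \<and> codim1_ahlfors \<nu> U"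

definition loc_lipschitz_on :: "'a set \<Rightarrow> ('a::metric_space \<Rightarrow> real) \<Rightarrow> bool" where
  "loc_lipschitz_on U f \<longleftrightarrow> (\<forall>x\<in>U. \<exists>r>0. \<exists>L. \<forall>y\<in>ball x r \<inter> U. \<forall>z\<in>ball x r \<inter> U.
      \<bar>f y - f z\<bar> \<le> L * dist y z)"

definition L1loc_conv :: "'a::metric_space measure \<Rightarrow> 'a set \<Rightarrow> (nat \<Rightarrow> 'a \<Rightarrow> real) \<Rightarrow> ('a \<Rightarrow> real) \<Rightarrow> bool" where
  "L1loc_conv \<nu> U us u \<longleftrightarrow> (\<forall>x\<in>U. \<exists>r>0.
      ((\<lambda>i. \<integral>\<^sup>+ y. ennreal \<bar>us i y - u y\<bar> * indicator (ball x r \<inter> U) y \<partial>\<nu>) \<longlonglongrightarrow> 0))"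

definition tv_open :: "'a::metric_space measure \<Rightarrow> ('a \<Rightarrow> real) \<Rightarrow> 'a set \<Rightarrow> ennreal" where
  "tv_open \<nu> u U =
     (INF ug \<in> {(us, gs). (\<forall>i. loc_lipschitz_on U (us i) \<and> upper_gradient_in U (us i) (gs i))
                           \<and> L1loc_conv \<nu> U us u}.
        liminf (\<lambda>i. \<integral>\<^sup>+ y. snd ug i y * indicator U y \<partial>\<nu>))"

definition tv_set :: "'a::metric_space measure \<Rightarrow> ('a \<Rightarrow> real) \<Rightarrow> 'a set \<Rightarrow> ennreal" where
  "tv_set \<nu> u A = (INF W \<in> {W. open W \<and> A \<subseteq> W}. tv_open \<nu> u W)"

definition perimeter_measure :: "'a::metric_space measure \<Rightarrow> 'a set \<Rightarrow> 'a measure" where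
  "perimeter_measure \<nu> E = measure_of UNIV (sets borel) (tv_set \<nu> (indicator E))"

text \<open>Trace T_Omega u(x) (0 where no trace value exists).\<close>
definition trace_pt :: "'a::metric_space measure \<Rightarrow> 'a set \<Rightarrow> ('a \<Rightarrow> real) \<Rightarrow> 'a \<Rightarrow> real" where
  "trace_pt \<nu> \<Omega> u x =
     (let P = (\<lambda>t::real. ((\<lambda>r. (\<integral>\<^sup>+ y. ennreal \<bar>u y - t\<bar> * indicator (\<Omega> \<inter> ball x r) y \<partial>\<nu>)
                               / emeasure \<nu> (\<Omega> \<inter> ball x r)) \<longlongrightarrow> 0) (at_right 0))
      in if \<exists>t. P t then (SOME t. P t) else 0)"

definition inner_set :: "'a::metric_space set \<Rightarrow> real \<Rightarrow> 'a set" where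
  "inner_set \<Omega> t = {x \<in> \<Omega>. infdist x (- \<Omega>) \<ge> t}"

definition regular_domain :: "'a::metric_space measure \<Rightarrow> 'a set \<Rightarrow> bool" where
  "regular_domain \<nu> \<Omega> \<longleftrightarrow> bounded \<Omega> \<and> open \<Omega> \<and> tv_open \<nu> (indicator \<Omega>) UNIV < \<infinity> \<and>
     tv_open \<nu> (indicator \<Omega>) UNIV =
       Limsup (at_right 0) (\<lambda>t. emeasure \<nu> (\<Omega> - inner_set \<Omega> t) / ennreal t)"

definition L2 :: "'a measure \<Rightarrow> 'a set \<Rightarrow> ('a \<Rightarrow> real) set" where
  "L2 \<nu> \<Omega> = {u. u \<in> borel_measurable \<nu> \<and> (\<integral>\<^sup>+ x. ennreal ((u x)\<^sup>2) * indicator \<Omega> x \<partial>\<nu>) < \<infinity>}"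

definition L2norm :: "'a measure \<Rightarrow> 'a set \<Rightarrow> ('a \<Rightarrow> real) \<Rightarrow> real" where
  "L2norm \<nu> \<Omega> u = sqrt (LINT x:\<Omega>|\<nu>. (u x)\<^sup>2)"

definition L2inner :: "'a measure \<Rightarrow> 'a set \<Rightarrow> ('a \<Rightarrow> real) \<Rightarrow> ('a \<Rightarrow> real) \<Rightarrow> real" where
  "L2inner \<nu> \<Omega> u v = (LINT x:\<Omega>|\<nu>. u x * v x)"

definition TV0 :: "'a::metric_space measure \<Rightarrow> 'a set \<Rightarrow> ('a \<Rightarrow> real) \<Rightarrow> ereal" where
  "TV0 \<nu> \<Omega> u =
     (if u \<in> L2 \<nu> \<Omega> \<and> set_integrable \<nu> \<Omega> u \<and> tv_open \<nu> u \<Omega> < \<infinity>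
      then enn2ereal (tv_open \<nu> u \<Omega> +
             (\<integral>\<^sup>+ x. ennreal \<bar>trace_pt \<nu> \<Omega> u x\<bar> * indicator (frontier \<Omega>) x \<partial>perimeter_measure \<nu> \<Omega>))
      else \<infinity>)"

definition lambda1 :: "'a::metric_space measure \<Rightarrow> 'a set \<Rightarrow> ereal" where
  "lambda1 \<nu> \<Omega> = (INF v \<in> {v \<in> L2 \<nu> \<Omega>. L2norm \<nu> \<Omega> v \<noteq> 0}. TV0 \<nu> \<Omega> v / ereal (L2norm \<nu> \<Omega> v))"

definition subdiff :: "'a measure \<Rightarrow> 'a set \<Rightarrow> (('a \<Rightarrow> real) \<Rightarrow> ereal) \<Rightarrow> ('a \<Rightarrow> real) \<Rightarrow> ('a \<Rightarrow> real) set" where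
  "subdiff \<nu> \<Omega> F u = {v \<in> L2 \<nu> \<Omega>. F u \<noteq> \<infinity> \<and> F u \<noteq> - \<infinity> \<and>
      (\<forall>w \<in> L2 \<nu> \<Omega>. F u + ereal (L2inner \<nu> \<Omega> v (\<lambda>x. w x - u x)) \<le> F w)}"

definition abs_cont_L2 :: "'a measure \<Rightarrow> 'a set \<Rightarrow> (real \<Rightarrow> 'a \<Rightarrow> real) \<Rightarrow> real \<Rightarrow> real \<Rightarrow> bool" where
  "abs_cont_L2 \<nu> \<Omega> u a b \<longleftrightarrow> (\<forall>\<epsilon>>0. \<exists>\<delta>>0. \<forall>(n::nat) aa bb.
      (\<forall>i<n. a \<le> aa i \<and> aa i \<le> bb i \<and> bb i \<le> b) \<and>
      (\<forall>i<n. \<forall>j<n. i \<noteq> j \<longrightarrow> bb i \<le> aa j \<or> bb j \<le> aa i) \<and>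
      (\<Sum>i<n. bb i - aa i) < \<delta> \<longrightarrow>
      (\<Sum>i<n. L2norm \<nu> \<Omega> (\<lambda>x. u (bb i) x - u (aa i) x)) < \<epsilon>)"

definition has_L2_deriv :: "'a measure \<Rightarrow> 'a set \<Rightarrow> (real \<Rightarrow> 'a \<Rightarrow> real) \<Rightarrow> ('a \<Rightarrow> real) \<Rightarrow> real \<Rightarrow> bool" where
  "has_L2_deriv \<nu> \<Omega> u v t \<longleftrightarrow>
     ((\<lambda>h. L2norm \<nu> \<Omega> (\<lambda>x. (u (t + h) x - u t x) / h - v x)) \<longlongrightarrow> 0) (at 0)"

text \<open>Strong solution (Brezis) of u' + dF(u) \<ni> 0 on [0,infinity), u(0) = u0.\<close>
definition strong_solution :: "'a measure \<Rightarrow> 'a set \<Rightarrow> (('a \<Rightarrow> real) \<Rightarrow> ereal) \<Rightarrow> ('a \<Rightarrow> real) \<Rightarrow> (real \<Rightarrow> 'a \<Rightarrow> real) \<Rightarrow> bool" where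
  "strong_solution \<nu> \<Omega> F u0 u \<longleftrightarrow>
     (\<forall>t\<ge>0. u t \<in> L2 \<nu> \<Omega>) \<and>
     (\<forall>t\<ge>0. ((\<lambda>s. L2norm \<nu> \<Omega> (\<lambda>x. u s x - u t x)) \<longlongrightarrow> 0) (at t within {0..})) \<and>
     L2norm \<nu> \<Omega> (\<lambda>x. u 0 x - u0 x) = 0 \<and>
     (\<forall>a b. 0 < a \<and> a \<le> b \<longrightarrow> abs_cont_L2 \<nu> \<Omega> u a b) \<and>
     (AE t in lborel. t > 0 \<longrightarrow>
        (\<exists>v \<in> L2 \<nu> \<Omega>. has_L2_deriv \<nu> \<Omega> u v t \<and> (\<lambda>x. - v x) \<in> subdiff \<nu> \<Omega> F (u t)))"

end

theory Submission
  imports Defs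
begin


definition ACg :: "(real \<Rightarrow> real) \<Rightarrow> real \<Rightarrow> real \<Rightarrow> bool" where
 "ACg g a b \<longleftrightarrow> (\<forall>\<epsilon>>0. \<exists>\<delta>>0. \<forall>(n::nat) aa bb.
      (\<forall>i<n. a \<le> aa i \<and> aa i \<le> bb i \<and> bb i \<le> b) \<and>
      (\<forall>i<n. \<forall>j<n. i \<noteq> j \<longrightarrow> bb i \<le> aa j \<or> bb j \<le> aa i) \<and>
      (\<Sum>i<n. bb i - aa i) < \<delta> \<longrightarrow>
      (\<Sum>i<n. \<bar>g (bb i) - g (aa i)\<bar>) < \<epsilon>)"

lemma ACgE2:
  assumes "ACg g a b" "\<epsilon> > 0"
  shows "\<exists>\<delta>>0. \<forall>(n::nat) aa bb.
      (\<forall>i<n. a \<le> aa i \<and> aa i \<le> bb i \<and> bb i \<le> b) \<and>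
      (\<forall>i<n. \<forall>j<n. i \<noteq> j \<longrightarrow> bb i \<le> aa j \<or> bb j \<le> aa i) \<and>
      (\<Sum>i<n. bb i - aa i) < \<delta> \<longrightarrow>
      (\<Sum>i<n. \<bar>g (bb i) - g (aa i)\<bar>) < \<epsilon>"
  using assms unfolding ACg_def by blast


lemma luzin_gap:
  fixes g :: "real \<Rightarrow> real"
  assumes ab: "a < b" and cont: "continuous_on {a..b} g" and AC: "ACg g a b"
    and N: "N \<in> null_sets lborel" and gab: "g a < g b"
  shows "\<exists>c. g a < c \<and> c < g b \<and> c \<notin> g ` (N \<inter> {a..b})"
proof -
  define \<epsilon> where "\<epsilon> = (g b - g a) / 2"
  have \<epsilon>: "\<epsilon> > 0" using gab by (simp add: \<epsilon>_def)
  obtain \<delta> where \<delta>: "\<delta> > 0" and ACd0: "\<forall>(n::nat) aa bb.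
      (\<forall>i<n. a \<le> aa i \<and> aa i \<le> bb i \<and> bb i \<le> b) \<and>
      (\<forall>i<n. \<forall>j<n. i \<noteq> j \<longrightarrow> bb i \<le> aa j \<or> bb j \<le> aa i) \<and>
      (\<Sum>i<n. bb i - aa i) < \<delta> \<longrightarrow>
      (\<Sum>i<n. \<bar>g (bb i) - g (aa i)\<bar>) < \<epsilon>"
    using ACgE2[OF AC \<epsilon>] by (elim exE conjE)
  note ACd = ACd0[rule_format]
  define S where "S = N \<inter> {a..b}"
  have Snull: "S \<in> null_sets lebesgue" unfolding S_def
    using null_sets_completionI[OF null_set_Int1[OF N, of "{a..b}"]] by (simp add: Int_commute)
  hence Sl: "S \<in> lmeasurable" and Sm: "measure lebesgue S = 0"
    by (auto intro: fmeasurableI_null_sets measure_eq_0_null_sets)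
  have Sab: "S \<subseteq> cbox a b" unfolding S_def by auto
  have half: "\<delta>/2 > 0" using \<delta> by simp
  obtain \<D> where Dc: "countable \<D>"
    and DK: "\<And>K. K \<in> \<D> \<Longrightarrow> K \<subseteq> cbox a b \<and> K \<noteq> {} \<and> (\<exists>c d. K = cbox c d)"
    and Dp: "pairwise (\<lambda>A B. interior A \<inter> interior B = {}) \<D>"
    and "\<And>u v. cbox u v \<in> \<D> \<Longrightarrow> \<exists>n. \<forall>i \<in> Basis. v \<bullet> i - u \<bullet> i = (b \<bullet> i - a \<bullet> i)/2^n"
    and Di: "\<And>K. \<lbrakk>K \<in> \<D>; box a b \<noteq> {}\<rbrakk> \<Longrightarrow> interior K \<noteq> {}"
    and Dcov: "S \<subseteq> \<Union>\<D>" and Dl: "\<Union>\<D> \<in> lmeasurable"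
    and Dm: "measure lebesgue (\<Union>\<D>) \<le> measure lebesgue S + \<delta>/2"
    by (rule measurable_outer_intervals_bounded[OF Sl Sab half]) (rule that)
  have Dm': "measure lebesgue (\<Union>\<D>) \<le> \<delta>/2" using Dm Sm by simp
  show ?thesis
  proof (cases "\<D> = {}")
    case True
    hence "S = {}" using Dcov by auto
    thus ?thesis using gab unfolding S_def by (intro exI[of _ "(g a + g b)/2"]) auto
  next
    case Dne: False
    have Kint: "\<exists>c d. c < d \<and> K = {c..d}" if KD: "K \<in> \<D>" for K
    proof -
      obtain c d where "K = cbox c d" using DK[OF KD] by blast
      moreover have "interior K \<noteq> {}" using Di[OF KD] ab by auto
      ultimately show ?thesis by (intro exI[of _ c] exI[of _ d]) auto
    qed
    have Kext: "\<exists>r s. r \<in> K \<and> s \<in> K \<and> (\<forall>x\<in>K. g r \<le> g x \<and> g x \<le> g s)" if KD: "K \<in> \<D>" for K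
    proof -
      obtain c d where cd: "c < d" "K = {c..d}" using Kint[OF KD] by blast
      have Ksub: "K \<subseteq> {a..b}" using DK[OF KD] by auto
      have co: "continuous_on K g" using cont Ksub by (rule continuous_on_subset)
      have "compact K" "K \<noteq> {}" using cd by auto
      obtain r where "r \<in> K" "\<forall>y\<in>K. g r \<le> g y"
        using continuous_attains_inf[OF \<open>compact K\<close> \<open>K \<noteq> {}\<close> co] by blast
      moreover obtain s where "s \<in> K" "\<forall>y\<in>K. g y \<le> g s"
        using continuous_attains_sup[OF \<open>compact K\<close> \<open>K \<noteq> {}\<close> co] by blast
      ultimately show ?thesis by blast
    qed
    define lo where "lo K = Inf K" for K :: "real set"
    define hi where "hi K = Sup K" for K :: "real set"
    have lohi: "lo K < hi K \<and> K = {lo K..hi K}" if KD: "K \<in> \<D>" for K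
    proof -
      obtain c d where cd: "c < d" "K = {c..d}" using Kint[OF KD] by blast
      thus ?thesis unfolding lo_def hi_def by simp
    qed
    have Kborel: "K \<in> sets borel" if KD: "K \<in> \<D>" for K
    proof -
      have "K = {lo K..hi K}" using lohi[OF KD] by blast
      thus ?thesis by (metis atLeastAtMost_borel)
    qed
    have Dborel: "\<Union>\<D> \<in> sets lborel" using Dc Kborel by (intro sets.countable_Union) auto
    define r where "r K = (SOME r. r \<in> K \<and> (\<forall>x\<in>K. g r \<le> g x))" for K
    define s where "s K = (SOME s. s \<in> K \<and> (\<forall>x\<in>K. g x \<le> g s))" for K
    have rs: "r K \<in> K \<and> s K \<in> K \<and> (\<forall>x\<in>K. g (r K) \<le> g x \<and> g x \<le> g (s K))" if KD: "K \<in> \<D>" for K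
    proof -
      obtain r0 s0 where "r0 \<in> K" "s0 \<in> K" "\<forall>x\<in>K. g r0 \<le> g x \<and> g x \<le> g s0"
        using Kext[OF KD] by blast
      hence h1: "r0 \<in> K \<and> (\<forall>x\<in>K. g r0 \<le> g x)" and h2: "s0 \<in> K \<and> (\<forall>x\<in>K. g x \<le> g s0)" by auto
      have "r K \<in> K \<and> (\<forall>x\<in>K. g (r K) \<le> g x)" unfolding r_def by (rule someI, rule h1)
      moreover have "s K \<in> K \<and> (\<forall>x\<in>K. g x \<le> g (s K))" unfolding s_def by (rule someI, rule h2)
      ultimately show ?thesis by blast
    qed
    define f where "f = from_nat_into \<D>"
    have fD: "f i \<in> \<D>" for i unfolding f_def using Dne by (simp add: from_nat_into)
    have rangef: "range f = \<D>" unfolding f_def using Dne Dc by simp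
    define new where "new i \<longleftrightarrow> f i \<notin> f ` {..<i}" for i
    define A where "A i = (if new i then min (r (f i)) (s (f i)) else a)" for i
    define B where "B i = (if new i then max (r (f i)) (s (f i)) else a)" for i
    define len where "len i = (if new i then g (s (f i)) - g (r (f i)) else 0)" for i
    have Kab: "\<And>K. K \<in> \<D> \<Longrightarrow> K \<subseteq> {a..b}" using DK by auto
    have AB: "a \<le> A i \<and> A i \<le> B i \<and> B i \<le> b" for i
      using rs[OF fD[of i]] Kab[OF fD[of i]] unfolding A_def B_def by auto
    have ABK: "new i \<Longrightarrow> lo (f i) \<le> A i \<and> B i \<le> hi (f i)" for i
      using rs[OF fD[of i]] lohi[OF fD[of i]] unfolding A_def B_def by auto
    have lenabs: "\<bar>g (B i) - g (A i)\<bar> = len i" for i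
      using rs[OF fD[of i]] unfolding A_def B_def len_def by (auto simp: min_def max_def)
    have len0: "len i \<ge> 0" for i using lenabs[of i] by simp
    have newdiff: "new i \<Longrightarrow> new j \<Longrightarrow> i \<noteq> j \<Longrightarrow> f i \<noteq> f j" for i j
      unfolding new_def by (cases "i < j") (auto simp: not_less_iff_gr_or_eq)
    have sep: "B i \<le> A j \<or> B j \<le> A i" if "i \<noteq> j" for i j
    proof (cases "new i \<and> new j")
      case True
      have ne: "f i \<noteq> f j" using newdiff True that by blast
      have "interior (f i) \<inter> interior (f j) = {}" using Dp fD ne unfolding pairwise_def by blast
      hence "{lo (f i)<..<hi (f i)} \<inter> {lo (f j)<..<hi (f j)} = {}"
        using lohi[OF fD[of i]] lohi[OF fD[of j]] by (metis interior_atLeastAtMost_real)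
      hence "hi (f i) \<le> lo (f j) \<or> hi (f j) \<le> lo (f i)"
      proof (rule contrapos_pp)
        assume "\<not> (hi (f i) \<le> lo (f j) \<or> hi (f j) \<le> lo (f i))"
        hence "(max (lo (f i)) (lo (f j)) + min (hi (f i)) (hi (f j)))/2 \<in> {lo (f i)<..<hi (f i)} \<inter> {lo (f j)<..<hi (f j)}"
          using lohi[OF fD[of i]] lohi[OF fD[of j]] by (auto simp: min_def max_def)
        thus "{lo (f i)<..<hi (f i)} \<inter> {lo (f j)<..<hi (f j)} \<noteq> {}" by blast
      qed
      moreover have "lo (f i) \<le> A i \<and> B i \<le> hi (f i)" "lo (f j) \<le> A j \<and> B j \<le> hi (f j)"
        using ABK True by auto
      ultimately show ?thesis by linarith
    next
      case False
      thus ?thesis using AB[of i] AB[of j] unfolding A_def B_def by auto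
    qed
    have Ulm: "emeasure lborel (\<Union>\<D>) \<le> ennreal (\<delta>/2)"
    proof -
      from Dborel have "emeasure lborel (\<Union>\<D>) = emeasure lebesgue (\<Union>\<D>)" by simp
      also have "\<dots> = ennreal (measure lebesgue (\<Union>\<D>))" using Dl by (simp add: emeasure_eq_measure2)
      also have "\<dots> \<le> ennreal (\<delta>/2)" using Dm' by (rule ennreal_leI)
      finally show ?thesis .
    qed
    have sumlen: "(\<Sum>i<n. len i) < \<epsilon>" for n
    proof -
      have "(\<Sum>i<n. B i - A i) < \<delta>"
      proof -
        have disj: "disjoint_family_on (\<lambda>i. {A i<..<B i}) {..<n}"
          unfolding disjoint_family_on_def using sep by fastforce
        have "ennreal (\<Sum>i<n. B i - A i) = (\<Sum>i<n. ennreal (B i - A i))"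
          by (rule sum_ennreal[symmetric]) (use AB in auto)
        also have "\<dots> = (\<Sum>i<n. emeasure lborel {A i<..<B i})" using AB by simp
        also have "\<dots> = emeasure lborel (\<Union>i<n. {A i<..<B i})"
          by (rule sum_emeasure) (use disj in auto)
        also have "\<dots> \<le> emeasure lborel (\<Union>\<D>)"
        proof (rule emeasure_mono)
          show "(\<Union>i<n. {A i<..<B i}) \<subseteq> \<Union>\<D>"
          proof
            fix x assume "x \<in> (\<Union>i<n. {A i<..<B i})"
            then obtain i where i: "A i < x" "x < B i" by auto
            hence "new i" unfolding A_def B_def by (auto split: if_splits)
            hence "x \<in> f i" using ABK[of i] i lohi[OF fD[of i]] by auto
            thus "x \<in> \<Union>\<D>" using fD by blast
          qed
          show "\<Union>\<D> \<in> sets lborel" by (rule Dborel)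
        qed
        also have "\<dots> \<le> ennreal (\<delta>/2)" by (rule Ulm)
        finally have "(\<Sum>i<n. B i - A i) \<le> \<delta>/2"
          using \<delta> by (subst (asm) ennreal_le_iff) auto
        thus ?thesis using \<delta> by simp
      qed
      hence "(\<forall>i<n. a \<le> A i \<and> A i \<le> B i \<and> B i \<le> b) \<and>
      (\<forall>i<n. \<forall>j<n. i \<noteq> j \<longrightarrow> B i \<le> A j \<or> B j \<le> A i) \<and>
      (\<Sum>i<n. B i - A i) < \<delta>" using AB sep by auto
      hence "(\<Sum>i<n. \<bar>g (B i) - g (A i)\<bar>) < \<epsilon>" by (rule ACd)
      thus ?thesis using lenabs by simp
    qed
    define I where "I i = (if new i then {g (r (f i)) .. g (s (f i))} else {})" for i
    have cover: "g ` S \<subseteq> (\<Union>i. I i)"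
    proof
      fix y assume "y \<in> g ` S"
      then obtain x where x: "x \<in> S" "y = g x" by auto
      then obtain K where K: "K \<in> \<D>" "x \<in> K" using Dcov by auto
      then obtain i where "f i = K" using rangef by auto
      define j where "j = (LEAST j. f j = K)"
      have fj: "f j = K" unfolding j_def by (rule LeastI) fact
      have "new j" unfolding new_def
      proof
        assume "f j \<in> f ` {..<j}"
        then obtain k where "k < j" "f k = K" using fj by auto
        thus False unfolding j_def using not_less_Least by blast
      qed
      hence "y \<in> I j" using rs[OF K(1)] K fj x unfolding I_def by auto
      thus "y \<in> (\<Union>i. I i)" by blast
    qed
    have Isets: "range I \<subseteq> sets lborel" unfolding I_def by auto
    have emI: "emeasure lborel (I i) = ennreal (len i)" for i
      using rs[OF fD[of i]] unfolding I_def len_def by auto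
    have "emeasure lborel (\<Union>i. I i) \<le> (\<Sum>i. emeasure lborel (I i))"
      by (rule emeasure_subadditive_countably[OF Isets])
    also have "\<dots> = (SUP n. \<Sum>i<n. ennreal (len i))" by (simp add: emI suminf_eq_SUP)
    also have "\<dots> \<le> ennreal \<epsilon>"
    proof (rule SUP_least)
      fix n
      have "(\<Sum>i<n. ennreal (len i)) = ennreal (\<Sum>i<n. len i)" using len0 by (simp add: sum_ennreal)
      also have "\<dots> \<le> ennreal \<epsilon>" using sumlen[of n] by (intro ennreal_leI) simp
      finally show "(\<Sum>i<n. ennreal (len i)) \<le> ennreal \<epsilon>" .
    qed
    finally have emU: "emeasure lborel (\<Union>i. I i) \<le> ennreal \<epsilon>" .
    show ?thesis
    proof (rule ccontr)
      assume "\<not> ?thesis"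
      hence "{g a<..<g b} \<subseteq> (\<Union>i. I i)" using cover unfolding S_def by force
      hence "emeasure lborel {g a<..<g b} \<le> emeasure lborel (\<Union>i. I i)"
        using Isets by (intro emeasure_mono) auto
      hence "ennreal (g b - g a) \<le> ennreal \<epsilon>" using emU gab by simp
      hence "g b - g a \<le> \<epsilon>" using \<epsilon> by (subst (asm) ennreal_le_iff) auto
      thus False using gab unfolding \<epsilon>_def by simp
    qed
  qed
qed

lemma descent_mono:
  fixes g :: "real \<Rightarrow> real"
  assumes ab: "a < b" and cont: "continuous_on {a..b} g" and AC: "ACg g a b"
    and N: "N \<in> null_sets lborel"
    and desc: "\<And>t \<eta>. t \<in> {a..<b} \<Longrightarrow> t \<notin> N \<Longrightarrow> \<eta> > 0 \<Longrightarrow> \<exists>s. t < s \<and> s < t + \<eta> \<and> g s < g t"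
  shows "g b \<le> g a"
proof (rule ccontr)
  assume "\<not> g b \<le> g a"
  hence gab: "g a < g b" by simp
  obtain c where c: "g a < c" "c < g b" "c \<notin> g ` (N \<inter> {a..b})"
    using luzin_gap[OF ab cont AC N gab] by blast
  define Z where "Z = {a..b} \<inter> g -` {..c}"
  have clZ: "closed Z" unfolding Z_def by (rule continuous_closed_preimage[OF cont]) auto
  have aZ: "a \<in> Z" using ab c unfolding Z_def by auto
  have bdd: "bdd_above Z" unfolding Z_def by (auto intro: bdd_aboveI[of _ b])
  define t where "t = Sup Z"
  have tZ: "t \<in> Z" unfolding t_def using closed_contains_Sup[OF _ bdd clZ] aZ by blast
  have ub: "\<And>x. x \<in> Z \<Longrightarrow> x \<le> t" unfolding t_def using bdd by (simp add: cSup_upper)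
  have tab: "a \<le> t" "t \<le> b" "g t \<le> c" using tZ unfolding Z_def by auto
  have tb: "t < b" using tab c by (metis order.not_eq_order_implies_strict not_le)
  have gt: "g t = c"
  proof (rule ccontr)
    assume "g t \<noteq> c"
    hence "g t \<le> c" "c \<le> g b" "t \<le> b" using tab c by auto
    moreover have "continuous_on {t..b} g" using cont by (rule continuous_on_subset) (use tab in auto)
    ultimately obtain x where x: "t \<le> x" "x \<le> b" "g x = c" using IVT'[of g t c b] by blast
    hence "x \<in> Z" using tab unfolding Z_def by auto
    hence "x = t" using ub x by force
    thus False using x \<open>g t \<noteq> c\<close> by simp
  qed
  have "t \<notin> N" using c(3) gt tab by auto
  then obtain s where s: "t < s" "s < t + (b - t)" "g s < g t" using desc[of t "b - t"] tab tb by auto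
  hence "s \<in> Z" using tab gt unfolding Z_def by auto
  thus False using ub s by force
qed


lemma L2_iff:
  assumes \<Omega>: "\<Omega> \<in> sets M"
  shows "f \<in> L2 M \<Omega> \<longleftrightarrow> f \<in> borel_measurable M \<and> set_integrable M \<Omega> (\<lambda>x. (f x)\<^sup>2)"
proof -
  have eq: "(\<integral>\<^sup>+ x. ennreal (norm (indicator \<Omega> x *\<^sub>R (f x)\<^sup>2)) \<partial>M) = (\<integral>\<^sup>+ x. ennreal ((f x)\<^sup>2) * indicator \<Omega> x \<partial>M)"
    by (rule nn_integral_cong) (auto split: split_indicator)
  show ?thesis
  proof
    assume f: "f \<in> L2 M \<Omega>"
    hence m: "f \<in> borel_measurable M" by (simp add: L2_def)
    have fin: "(\<integral>\<^sup>+ x. ennreal (norm (indicator \<Omega> x *\<^sub>R (f x)\<^sup>2)) \<partial>M) < \<infinity>"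
      using f unfolding eq L2_def by simp
    have "integrable M (\<lambda>x. indicator \<Omega> x *\<^sub>R (f x)\<^sup>2)"
      using fin m \<Omega> by (intro integrableI_bounded) auto
    thus "f \<in> borel_measurable M \<and> set_integrable M \<Omega> (\<lambda>x. (f x)\<^sup>2)" using m by (simp add: set_integrable_def)
  next
    assume h: "f \<in> borel_measurable M \<and> set_integrable M \<Omega> (\<lambda>x. (f x)\<^sup>2)"
    hence "(\<integral>\<^sup>+ x. ennreal (norm (indicator \<Omega> x *\<^sub>R (f x)\<^sup>2)) \<partial>M) < \<infinity>"
    proof -
      have "integrable M (\<lambda>x. indicator \<Omega> x *\<^sub>R (f x)\<^sup>2)" using h by (simp add: set_integrable_def)
      thus ?thesis unfolding integrable_iff_bounded by (rule conjunct2)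
    qed
    hence "(\<integral>\<^sup>+ x. ennreal ((f x)\<^sup>2) * indicator \<Omega> x \<partial>M) < \<infinity>" unfolding eq .
    thus "f \<in> L2 M \<Omega>" using h by (simp add: L2_def)
  qed
qed

lemma L2_lin:
  assumes \<Omega>: "\<Omega> \<in> sets M" and f: "f \<in> L2 M \<Omega>" and g: "g \<in> L2 M \<Omega>"
  shows "(\<lambda>x. c * f x + d * g x) \<in> L2 M \<Omega>"
proof -
  have fm: "f \<in> borel_measurable M" and fi: "set_integrable M \<Omega> (\<lambda>x. (f x)\<^sup>2)"
    using f L2_iff[OF \<Omega>] by auto
  have gm: "g \<in> borel_measurable M" and gi: "set_integrable M \<Omega> (\<lambda>x. (g x)\<^sup>2)"
    using g L2_iff[OF \<Omega>] by auto
  have i2: "set_integrable M \<Omega> (\<lambda>x. 2 * c\<^sup>2 * (f x)\<^sup>2 + 2 * d\<^sup>2 * (g x)\<^sup>2)"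
    using fi gi by (intro set_integral_add set_integrable_mult_right) auto
  have "set_integrable M \<Omega> (\<lambda>x. (c * f x + d * g x)\<^sup>2)"
  proof -
    have I: "integrable M (\<lambda>x. indicator \<Omega> x *\<^sub>R (2 * c\<^sup>2 * (f x)\<^sup>2 + 2 * d\<^sup>2 * (g x)\<^sup>2))"
      using i2 by (simp add: set_integrable_def)
    have Mb: "(\<lambda>x. indicator \<Omega> x *\<^sub>R (c * f x + d * g x)\<^sup>2) \<in> borel_measurable M"
      using fm gm \<Omega> by measurable
    have "(c * f x + d * g x)\<^sup>2 \<le> 2 * c\<^sup>2 * (f x)\<^sup>2 + 2 * d\<^sup>2 * (g x)\<^sup>2" for x
    proof -
      have "0 \<le> (c * f x - d * g x)\<^sup>2" by simp
      thus ?thesis by (simp add: power2_eq_square algebra_simps)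
    qed
    hence AEb: "AE x in M. norm (indicator \<Omega> x *\<^sub>R (c * f x + d * g x)\<^sup>2)
        \<le> norm (indicator \<Omega> x *\<^sub>R (2 * c\<^sup>2 * (f x)\<^sup>2 + 2 * d\<^sup>2 * (g x)\<^sup>2))"
      by (intro AE_I2) (auto split: split_indicator)
    show ?thesis unfolding set_integrable_def by (rule Bochner_Integration.integrable_bound[OF I Mb AEb])
  qed
  moreover have "(\<lambda>x. c * f x + d * g x) \<in> borel_measurable M" using fm gm by measurable
  ultimately show ?thesis using L2_iff[OF \<Omega>] by blast
qed

lemma L2_prod:
  assumes \<Omega>: "\<Omega> \<in> sets M" and f: "f \<in> L2 M \<Omega>" and g: "g \<in> L2 M \<Omega>"
  shows "set_integrable M \<Omega> (\<lambda>x. f x * g x)"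
proof -
  have fm: "f \<in> borel_measurable M" and fi: "set_integrable M \<Omega> (\<lambda>x. (f x)\<^sup>2)"
    using f L2_iff[OF \<Omega>] by auto
  have gm: "g \<in> borel_measurable M" and gi: "set_integrable M \<Omega> (\<lambda>x. (g x)\<^sup>2)"
    using g L2_iff[OF \<Omega>] by auto
  have i2: "set_integrable M \<Omega> (\<lambda>x. (f x)\<^sup>2 + (g x)\<^sup>2)"
    using fi gi by (intro set_integral_add) auto
  show ?thesis
  proof -
    have I: "integrable M (\<lambda>x. indicator \<Omega> x *\<^sub>R ((f x)\<^sup>2 + (g x)\<^sup>2))"
      using i2 by (simp add: set_integrable_def)
    have Mb: "(\<lambda>x. indicator \<Omega> x *\<^sub>R (f x * g x)) \<in> borel_measurable M"
      using fm gm \<Omega> by measurable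
    have "\<bar>f x * g x\<bar> \<le> (f x)\<^sup>2 + (g x)\<^sup>2" for x
    proof -
      have "0 \<le> (\<bar>f x\<bar> - \<bar>g x\<bar>)\<^sup>2" by simp
      hence h: "2 * (\<bar>f x\<bar> * \<bar>g x\<bar>) \<le> (f x)\<^sup>2 + (g x)\<^sup>2" by (simp add: power2_eq_square algebra_simps)
      have "0 \<le> \<bar>f x\<bar> * \<bar>g x\<bar>" by simp
      moreover have "\<bar>f x * g x\<bar> = \<bar>f x\<bar> * \<bar>g x\<bar>" by (rule abs_mult)
      ultimately show ?thesis using h by linarith
    qed
    hence AEb: "AE x in M. norm (indicator \<Omega> x *\<^sub>R (f x * g x)) \<le> norm (indicator \<Omega> x *\<^sub>R ((f x)\<^sup>2 + (g x)\<^sup>2))"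
      by (intro AE_I2) (auto split: split_indicator)
    show ?thesis unfolding set_integrable_def by (rule Bochner_Integration.integrable_bound[OF I Mb AEb])
  qed
qed

lemma ip_lin:
  assumes \<Omega>: "\<Omega> \<in> sets M" and f: "f \<in> L2 M \<Omega>" and g: "g \<in> L2 M \<Omega>" and h: "h \<in> L2 M \<Omega>"
  shows "L2inner M \<Omega> (\<lambda>x. c * f x + d * g x) h = c * L2inner M \<Omega> f h + d * L2inner M \<Omega> g h"
proof -
  have "L2inner M \<Omega> (\<lambda>x. c * f x + d * g x) h = (LINT x:\<Omega>|M. c * (f x * h x) + d * (g x * h x))"
    unfolding L2inner_def by (simp add: algebra_simps)
  also have "\<dots> = (LINT x:\<Omega>|M. c * (f x * h x)) + (LINT x:\<Omega>|M. d * (g x * h x))"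
    using L2_prod[OF \<Omega> f h] L2_prod[OF \<Omega> g h]
    by (intro set_integral_add) (auto intro: set_integrable_mult_right)
  also have "\<dots> = c * L2inner M \<Omega> f h + d * L2inner M \<Omega> g h"
    unfolding L2inner_def by (simp add: set_integral_mult_right)
  finally show ?thesis .
qed

lemma ip_sym: "L2inner M \<Omega> f g = L2inner M \<Omega> g f"
  unfolding L2inner_def by (simp add: mult.commute)

lemma ip_nonneg: "L2inner M \<Omega> f f \<ge> 0"
  unfolding L2inner_def set_lebesgue_integral_def
  by (intro integral_nonneg_AE AE_I2) (auto split: split_indicator)

lemma norm_ip: "L2norm M \<Omega> f = sqrt (L2inner M \<Omega> f f)"
  unfolding L2norm_def L2inner_def by (simp add: power2_eq_square)

lemma L2norm_nonneg: "L2norm M \<Omega> f \<ge> 0" by (simp add: L2norm_def set_lebesgue_integral_def)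

lemma quad_disc:
  fixes a b c :: real
  assumes "\<And>t. 0 \<le> a + 2 * t * b + t\<^sup>2 * c" and "a \<ge> 0" and "c \<ge> 0"
  shows "b \<le> sqrt a * sqrt c"
proof (cases "c = 0")
  case True
  have "b = 0"
  proof (rule ccontr)
    assume "b \<noteq> 0"
    have "0 \<le> a + 2 * (-(a+1)/(2*b)) * b + (-(a+1)/(2*b))\<^sup>2 * c" by (rule assms(1))
    thus False using True \<open>b \<noteq> 0\<close> by (simp add: field_simps)
  qed
  thus ?thesis using assms by simp
next
  case False
  hence c: "c > 0" using assms by simp
  have "0 \<le> a + 2 * (-b/c) * b + (-b/c)\<^sup>2 * c" by (rule assms(1))
  hence "0 \<le> a - b\<^sup>2 / c" using c by (simp add: power2_eq_square field_simps)
  hence "b\<^sup>2 \<le> a * c" using c by (simp add: field_simps)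
  hence "sqrt (b\<^sup>2) \<le> sqrt (a * c)" by (rule real_sqrt_le_mono)
  thus ?thesis by (simp add: real_sqrt_mult)
qed

lemma ip_expand:
  assumes \<Omega>: "\<Omega> \<in> sets M" and f: "f \<in> L2 M \<Omega>" and g: "g \<in> L2 M \<Omega>"
  shows "L2inner M \<Omega> (\<lambda>x. f x + t * g x) (\<lambda>x. f x + t * g x)
     = L2inner M \<Omega> f f + 2 * t * L2inner M \<Omega> f g + t\<^sup>2 * L2inner M \<Omega> g g"
proof -
  have fg: "(\<lambda>x. 1 * f x + t * g x) \<in> L2 M \<Omega>" by (rule L2_lin[OF \<Omega> f g])
  have "L2inner M \<Omega> (\<lambda>x. f x + t * g x) (\<lambda>x. f x + t * g x)
      = 1 * L2inner M \<Omega> f (\<lambda>x. 1 * f x + t * g x) + t * L2inner M \<Omega> g (\<lambda>x. 1 * f x + t * g x)"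
    using ip_lin[OF \<Omega> f g fg, of 1 t] by simp
  also have "L2inner M \<Omega> f (\<lambda>x. 1 * f x + t * g x) = 1 * L2inner M \<Omega> f f + t * L2inner M \<Omega> g f"
    by (rule trans[OF ip_sym ip_lin[OF \<Omega> f g f]])
  also have "L2inner M \<Omega> g (\<lambda>x. 1 * f x + t * g x) = 1 * L2inner M \<Omega> f g + t * L2inner M \<Omega> g g"
    by (rule trans[OF ip_sym ip_lin[OF \<Omega> f g g]])
  finally have "L2inner M \<Omega> (\<lambda>x. f x + t * g x) (\<lambda>x. f x + t * g x) =
     1 * (1 * L2inner M \<Omega> f f + t * L2inner M \<Omega> g f) + t * (1 * L2inner M \<Omega> f g + t * L2inner M \<Omega> g g)" .
  moreover have "L2inner M \<Omega> g f = L2inner M \<Omega> f g" by (rule ip_sym)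
  ultimately show ?thesis by (simp add: power2_eq_square distrib_left)
qed

lemma CS:
  assumes \<Omega>: "\<Omega> \<in> sets M" and f: "f \<in> L2 M \<Omega>" and g: "g \<in> L2 M \<Omega>"
  shows "L2inner M \<Omega> f g \<le> L2norm M \<Omega> f * L2norm M \<Omega> g"
  unfolding norm_ip
proof (rule quad_disc)
  fix t
  show "0 \<le> L2inner M \<Omega> f f + 2 * t * L2inner M \<Omega> f g + t\<^sup>2 * L2inner M \<Omega> g g"
    using ip_expand[OF \<Omega> f g, of t] ip_nonneg[of M \<Omega> "\<lambda>x. f x + t * g x"] by simp
qed (auto intro: ip_nonneg)

lemma tri:
  assumes \<Omega>: "\<Omega> \<in> sets M" and f: "f \<in> L2 M \<Omega>" and g: "g \<in> L2 M \<Omega>"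
  shows "L2norm M \<Omega> (\<lambda>x. f x + g x) \<le> L2norm M \<Omega> f + L2norm M \<Omega> g"
proof -
  have "L2inner M \<Omega> (\<lambda>x. f x + g x) (\<lambda>x. f x + g x) = L2inner M \<Omega> f f + 2 * L2inner M \<Omega> f g + L2inner M \<Omega> g g"
    using ip_expand[OF \<Omega> f g, of 1] by simp
  also have "\<dots> \<le> (L2norm M \<Omega> f)\<^sup>2 + 2 * (L2norm M \<Omega> f * L2norm M \<Omega> g) + (L2norm M \<Omega> g)\<^sup>2"
    using CS[OF \<Omega> f g] ip_nonneg[of M \<Omega> f] ip_nonneg[of M \<Omega> g] by (simp add: norm_ip)
  also have "\<dots> = (L2norm M \<Omega> f + L2norm M \<Omega> g)\<^sup>2" by (simp add: power2_eq_square algebra_simps)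
  finally have "sqrt (L2inner M \<Omega> (\<lambda>x. f x + g x) (\<lambda>x. f x + g x)) \<le> sqrt ((L2norm M \<Omega> f + L2norm M \<Omega> g)\<^sup>2)"
    by (rule real_sqrt_le_mono)
  thus ?thesis using L2norm_nonneg[of M \<Omega> f] L2norm_nonneg[of M \<Omega> g] by (simp add: norm_ip)
qed

lemma scale:
  "L2norm M \<Omega> (\<lambda>x. c * f x) = \<bar>c\<bar> * L2norm M \<Omega> f"
proof -
  have "L2inner M \<Omega> (\<lambda>x. c * f x) (\<lambda>x. c * f x) = c\<^sup>2 * L2inner M \<Omega> f f"
  proof -
    have "(\<lambda>x. c * f x * (c * f x)) = (\<lambda>x. c\<^sup>2 * (f x * f x))" by (auto simp: power2_eq_square)
    thus ?thesis unfolding L2inner_def by simp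
  qed
  thus ?thesis by (simp add: norm_ip real_sqrt_mult)
qed

lemma rev_tri:
  assumes \<Omega>: "\<Omega> \<in> sets M" and f: "f \<in> L2 M \<Omega>" and g: "g \<in> L2 M \<Omega>"
  shows "\<bar>L2norm M \<Omega> f - L2norm M \<Omega> g\<bar> \<le> L2norm M \<Omega> (\<lambda>x. f x - g x)"
proof -
  have fg: "(\<lambda>x. 1 * f x + (-1) * g x) \<in> L2 M \<Omega>" by (rule L2_lin[OF \<Omega> f g])
  hence fg': "(\<lambda>x. f x - g x) \<in> L2 M \<Omega>" by simp
  have gf: "(\<lambda>x. 1 * g x + (-1) * f x) \<in> L2 M \<Omega>" by (rule L2_lin[OF \<Omega> g f])
  hence gf': "(\<lambda>x. g x - f x) \<in> L2 M \<Omega>" by simp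
  have "L2norm M \<Omega> f \<le> L2norm M \<Omega> (\<lambda>x. f x - g x) + L2norm M \<Omega> g"
    using tri[OF \<Omega> fg' g] by simp
  moreover have "L2norm M \<Omega> g \<le> L2norm M \<Omega> (\<lambda>x. g x - f x) + L2norm M \<Omega> f"
    using tri[OF \<Omega> gf' f] by simp
  moreover have "L2norm M \<Omega> (\<lambda>x. g x - f x) = L2norm M \<Omega> (\<lambda>x. f x - g x)"
    using scale[of M \<Omega> "-1" "\<lambda>x. f x - g x"] by simp
  ultimately show ?thesis by linarith
qed


lemma sq_bound:
  fixes \<phi> h l V :: real
  assumes "\<phi> > 0"
  shows "\<phi>\<^sup>2 - 2 * h * l * \<phi> + h\<^sup>2 * V \<le> (\<phi> - h * l + h\<^sup>2 * V / (2 * \<phi>))\<^sup>2"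
proof -
  have "(\<phi> - h * l + h\<^sup>2 * V / (2 * \<phi>))\<^sup>2 = \<phi>\<^sup>2 - 2 * h * l * \<phi> + h\<^sup>2 * V + (h * l - h\<^sup>2 * V / (2 * \<phi>))\<^sup>2"
    using assms by (simp add: power2_eq_square field_simps)
  thus ?thesis by simp
qed

lemma dini_step:
  assumes \<Omega>: "\<Omega> \<in> sets M" and ut: "ut \<in> L2 M \<Omega>" and v: "v \<in> L2 M \<Omega>"
    and U: "\<And>h. h > 0 \<Longrightarrow> U h \<in> L2 M \<Omega>"
    and phi: "L2norm M \<Omega> ut > 0" and lam: "lam > 0" and lam': "lam' < lam"
    and ip: "L2inner M \<Omega> v ut \<le> - lam * L2norm M \<Omega> ut"
    and D: "((\<lambda>h. L2norm M \<Omega> (\<lambda>x. (U h x - ut x) / h - v x)) \<longlongrightarrow> 0) (at 0)"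
    and eta: "\<eta> > 0"
  shows "\<exists>h. 0 < h \<and> h < \<eta> \<and> L2norm M \<Omega> (U h) + lam' * h < L2norm M \<Omega> ut"
proof -
  define \<phi> where "\<phi> = L2norm M \<Omega> ut"
  define V where "V = L2inner M \<Omega> v v"
  define \<kappa> where "\<kappa> = lam - lam'"
  have V0: "V \<ge> 0" unfolding V_def by (rule ip_nonneg)
  have \<kappa>: "\<kappa> > 0" using lam' by (simp add: \<kappa>_def)
  have "eventually (\<lambda>h. L2norm M \<Omega> (\<lambda>x. (U h x - ut x) / h - v x) < \<kappa>/2) (at 0)"
    by (rule order_tendstoD(2)[OF D]) (use \<kappa> in simp)
  then obtain d where d: "d > 0" and dH: "\<And>h. h \<noteq> 0 \<Longrightarrow> dist h 0 < d \<Longrightarrow> L2norm M \<Omega> (\<lambda>x. (U h x - ut x) / h - v x) < \<kappa>/2"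
    unfolding eventually_at by blast
  define h where "h = min (min (\<eta>/2) (d/2)) (min (\<phi>/(lam+1)) (\<kappa>*\<phi>/(V+1)/2))"
  have \<phi>0: "\<phi> > 0" using phi by (simp add: \<phi>_def)
  have h0: "h > 0" unfolding h_def using eta d \<phi>0 lam \<kappa> V0 by auto
  have heta: "h < \<eta>" and hd: "h < d" unfolding h_def using eta d by auto
  have hlam: "h * lam \<le> \<phi>"
  proof -
    have "h \<le> \<phi>/(lam+1)" unfolding h_def by linarith
    hence "h * (lam + 1) \<le> \<phi>" using lam by (simp add: field_simps)
    thus ?thesis using h0 by (simp add: algebra_simps)
  qed
  have hV: "h * V / (2 * \<phi>) \<le> \<kappa>/2"
  proof -
    have "h \<le> \<kappa>*\<phi>/(V+1)/2" unfolding h_def by linarith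
    hence "h * (V + 1) * 2 \<le> \<kappa> * \<phi>" using V0 by (simp add: field_simps)
    hence "h * V * 2 \<le> \<kappa> * \<phi>" using h0 by (simp add: algebra_simps)
    moreover have "h * V \<ge> 0" using h0 V0 by simp
    ultimately have "h * V \<le> \<kappa> * \<phi>" by linarith
    thus ?thesis using \<phi>0 by (simp add: field_simps)
  qed
  define w where "w = (\<lambda>x. (U h x - ut x) / h - v x)"
  have Uh: "U h \<in> L2 M \<Omega>" using U h0 by simp
  have w1: "(\<lambda>x. (1/h) * U h x + (-1/h) * ut x) \<in> L2 M \<Omega>" by (rule L2_lin[OF \<Omega> Uh ut])
  have w2: "(\<lambda>x. 1 * ((1/h) * U h x + (-1/h) * ut x) + (-1) * v x) \<in> L2 M \<Omega>" by (rule L2_lin[OF \<Omega> w1 v])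
  have weq: "(\<lambda>x. 1 * ((1/h) * U h x + (-1/h) * ut x) + (-1) * v x) = w"
    unfolding w_def by (rule ext) (simp add: diff_divide_distrib)
  have wL2: "w \<in> L2 M \<Omega>" using w2 weq by simp
  have r: "L2norm M \<Omega> w < \<kappa>/2" unfolding w_def using dH h0 hd by simp
  have a1: "(\<lambda>x. 1 * ut x + h * v x) \<in> L2 M \<Omega>" by (rule L2_lin[OF \<Omega> ut v])
  hence a: "(\<lambda>x. ut x + h * v x) \<in> L2 M \<Omega>" by simp
  have b1: "(\<lambda>x. h * w x + 0 * w x) \<in> L2 M \<Omega>" by (rule L2_lin[OF \<Omega> wL2 wL2])
  hence b: "(\<lambda>x. h * w x) \<in> L2 M \<Omega>" by simp
  have Ueq: "U h = (\<lambda>x. (ut x + h * v x) + h * w x)"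
    unfolding w_def using h0 by (auto simp: field_simps)
  have "L2norm M \<Omega> (U h) \<le> L2norm M \<Omega> (\<lambda>x. ut x + h * v x) + L2norm M \<Omega> (\<lambda>x. h * w x)"
    unfolding Ueq by (rule tri[OF \<Omega> a b])
  also have "L2norm M \<Omega> (\<lambda>x. h * w x) = h * L2norm M \<Omega> w" using scale[of M \<Omega> h w] h0 by simp
  also have "L2norm M \<Omega> (\<lambda>x. ut x + h * v x) \<le> \<phi> - h * lam + h\<^sup>2 * V / (2 * \<phi>)"
  proof -
    have pp: "\<phi>\<^sup>2 = L2inner M \<Omega> ut ut" unfolding \<phi>_def norm_ip using ip_nonneg by simp
    have "L2inner M \<Omega> (\<lambda>x. ut x + h * v x) (\<lambda>x. ut x + h * v x) = \<phi>\<^sup>2 + 2 * h * L2inner M \<Omega> v ut + h\<^sup>2 * V"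
      using ip_expand[OF \<Omega> ut v, of h] pp ip_sym[of M \<Omega> ut v] by (simp add: V_def)
    also have "\<dots> \<le> \<phi>\<^sup>2 - 2 * h * lam * \<phi> + h\<^sup>2 * V"
    proof -
      have "h * L2inner M \<Omega> v ut \<le> h * (- lam * L2norm M \<Omega> ut)"
        using ip h0 by (intro mult_left_mono) auto
      thus ?thesis unfolding \<phi>_def by (simp add: algebra_simps)
    qed
    also have "\<dots> \<le> (\<phi> - h * lam + h\<^sup>2 * V / (2 * \<phi>))\<^sup>2" by (rule sq_bound[OF \<phi>0])
    finally have "sqrt (L2inner M \<Omega> (\<lambda>x. ut x + h * v x) (\<lambda>x. ut x + h * v x)) \<le> sqrt ((\<phi> - h * lam + h\<^sup>2 * V / (2 * \<phi>))\<^sup>2)"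
      by (rule real_sqrt_le_mono)
    moreover have "\<phi> - h * lam + h\<^sup>2 * V / (2 * \<phi>) \<ge> 0"
      using hlam V0 \<phi>0 by (simp add: add_nonneg_nonneg)
    ultimately show ?thesis by (simp add: norm_ip)
  qed
  finally have "L2norm M \<Omega> (U h) \<le> \<phi> - h * lam + h * (h * V / (2 * \<phi>)) + h * L2norm M \<Omega> w"
    by (simp add: power2_eq_square)
  also have "\<dots> < \<phi> - h * lam + h * (\<kappa>/2) + h * (\<kappa>/2)"
    using hV r h0 by (intro add_le_less_mono add_left_mono mult_left_mono mult_strict_left_mono) auto
  also have "\<dots> = \<phi> - lam' * h" unfolding \<kappa>_def by (simp add: algebra_simps)
  finally show ?thesis using h0 heta unfolding \<phi>_def by (intro exI[of _ h]) auto
qed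


lemma tv_open_zero: "tv_open \<nu> (\<lambda>x. 0) \<Omega> = 0"
proof -
  have mem: "((\<lambda>i x. 0::real), (\<lambda>i x. 0::ennreal)) \<in> {(us, gs). (\<forall>i. loc_lipschitz_on \<Omega> (us i) \<and> upper_gradient_in \<Omega> (us i) (gs i))
                           \<and> L1loc_conv \<nu> \<Omega> us (\<lambda>x. 0)}"
  proof -
    have "loc_lipschitz_on \<Omega> (\<lambda>x. 0::real)"
      unfolding loc_lipschitz_on_def by (intro ballI exI[of _ 1] conjI exI[of _ 0]) auto
    moreover have "upper_gradient_in \<Omega> (\<lambda>x. 0::real) (\<lambda>x. 0)"
      unfolding upper_gradient_in_def by simp
    moreover have "L1loc_conv \<nu> \<Omega> (\<lambda>i x. 0) (\<lambda>x. 0)"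
      unfolding L1loc_conv_def by (intro ballI exI[of _ 1]) simp
    ultimately show ?thesis by simp
  qed
  have "tv_open \<nu> (\<lambda>x. 0) \<Omega> \<le> 0"
    unfolding tv_open_def by (rule INF_lower2[OF mem]) (simp add: Liminf_const)
  thus ?thesis by simp
qed

lemma trace_zero:
  assumes dr: "doubling_radon \<nu>" and op: "open \<Omega>" and x: "x \<in> frontier \<Omega>"
  shows "trace_pt \<nu> \<Omega> (\<lambda>x. 0) x = 0"
proof -
  have sets: "sets \<nu> = sets borel" using dr by (simp add: doubling_radon_def)
  have ballpos: "\<And>y r. r > 0 \<Longrightarrow> 0 < emeasure \<nu> (ball y r) \<and> emeasure \<nu> (ball y r) < \<infinity>"
    using dr by (simp add: doubling_radon_def)
  define P where "P = (\<lambda>t::real. ((\<lambda>r. (\<integral>\<^sup>+ y. ennreal \<bar>0 - t\<bar> * indicator (\<Omega> \<inter> ball x r) y \<partial>\<nu>)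
                               / emeasure \<nu> (\<Omega> \<inter> ball x r)) \<longlongrightarrow> 0) (at_right 0))"
  have Pt: "t = 0" if "P t" for t
  proof -
    have ev: "eventually (\<lambda>r. (\<integral>\<^sup>+ y. ennreal \<bar>0 - t\<bar> * indicator (\<Omega> \<inter> ball x r) y \<partial>\<nu>)
                               / emeasure \<nu> (\<Omega> \<inter> ball x r) = ennreal \<bar>t\<bar>) (at_right (0::real))"
      unfolding eventually_at_right_field
    proof (intro exI[of _ 1] conjI allI impI)
      fix r :: real assume r: "0 < r" "r < 1"
      have meas: "\<Omega> \<inter> ball x r \<in> sets \<nu>" using sets op by simp
      have "x \<in> closure \<Omega>" using x by (simp add: frontier_def)
      then obtain y where y: "y \<in> \<Omega>" "dist y x < r" using r by (metis closure_approachable)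
      have "open (\<Omega> \<inter> ball x r)" using op by auto
      moreover have "y \<in> \<Omega> \<inter> ball x r" using y by (auto simp: dist_commute)
      ultimately obtain \<rho> where \<rho>: "\<rho> > 0" "ball y \<rho> \<subseteq> \<Omega> \<inter> ball x r"
        by (meson open_contains_ball)
      have "0 < emeasure \<nu> (ball y \<rho>)" using ballpos \<rho> by blast
      also have "\<dots> \<le> emeasure \<nu> (\<Omega> \<inter> ball x r)" using \<rho> meas by (intro emeasure_mono) auto
      finally have pos: "emeasure \<nu> (\<Omega> \<inter> ball x r) \<noteq> 0" by simp
      have "emeasure \<nu> (\<Omega> \<inter> ball x r) \<le> emeasure \<nu> (ball x r)"
        using sets by (intro emeasure_mono) auto
      also have "\<dots> < \<infinity>" using ballpos r by blast
      finally have fin: "emeasure \<nu> (\<Omega> \<inter> ball x r) \<noteq> \<infinity>" by simp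
      have "(\<integral>\<^sup>+ y. ennreal \<bar>0 - t\<bar> * indicator (\<Omega> \<inter> ball x r) y \<partial>\<nu>) = ennreal \<bar>t\<bar> * emeasure \<nu> (\<Omega> \<inter> ball x r)"
        using meas by (simp add: nn_integral_cmult_indicator)
      thus "(\<integral>\<^sup>+ y. ennreal \<bar>0 - t\<bar> * indicator (\<Omega> \<inter> ball x r) y \<partial>\<nu>) / emeasure \<nu> (\<Omega> \<inter> ball x r) = ennreal \<bar>t\<bar>"
        using pos fin by (simp add: ennreal_mult_divide_eq)
    qed simp
    have "((\<lambda>r. ennreal \<bar>t\<bar>) \<longlongrightarrow> 0) (at_right (0::real))"
      using tendsto_cong[OF ev] that unfolding P_def by simp
    hence "ennreal \<bar>t\<bar> = 0" by (simp add: tendsto_const_iff)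
    thus ?thesis by simp
  qed
  show ?thesis
  proof (cases "\<exists>t. P t")
    case True
    hence "P (SOME t. P t)" by (rule someI_ex)
    hence "(SOME t. P t) = 0" by (rule Pt)
    thus ?thesis unfolding trace_pt_def Let_def P_def[symmetric] using True by simp
  next
    case False
    thus ?thesis unfolding trace_pt_def Let_def P_def[symmetric] by auto
  qed
qed

lemma TV0_zero:
  assumes dr: "doubling_radon \<nu>" and op: "open \<Omega>"
  shows "TV0 \<nu> \<Omega> (\<lambda>x. 0) = 0"
proof -
  have sets: "sets \<nu> = sets borel" using dr by (simp add: doubling_radon_def)
  have L: "(\<lambda>x. 0::real) \<in> L2 \<nu> \<Omega>" unfolding L2_def by simp
  have tr: "(\<integral>\<^sup>+ x. ennreal \<bar>trace_pt \<nu> \<Omega> (\<lambda>x. 0) x\<bar> * indicator (frontier \<Omega>) x \<partial>perimeter_measure \<nu> \<Omega>) = 0"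
  proof -
    have "(\<integral>\<^sup>+ x. ennreal \<bar>trace_pt \<nu> \<Omega> (\<lambda>x. 0) x\<bar> * indicator (frontier \<Omega>) x \<partial>perimeter_measure \<nu> \<Omega>)
       = (\<integral>\<^sup>+ x. 0 \<partial>perimeter_measure \<nu> \<Omega>)"
      by (rule nn_integral_cong) (auto simp: trace_zero[OF dr op] split: split_indicator)
    thus ?thesis by simp
  qed
  have si: "set_integrable \<nu> \<Omega> (\<lambda>x. 0::real)" by (simp add: set_integrable_def)
  show ?thesis unfolding TV0_def using L si tv_open_zero[of \<nu> \<Omega>] tr by (simp add: zero_ennreal.rep_eq)
qed


lemma inf_bound:
  assumes "\<And>T. T > c \<Longrightarrow> T \<in> S"
  shows "Inf (ereal ` S) \<le> ereal c"
proof (rule ccontr)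
  assume "\<not> ?thesis"
  hence "ereal c < Inf (ereal ` S)" by simp
  then obtain z where z: "ereal c < ereal z" "ereal z < Inf (ereal ` S)" using ereal_dense2 by blast
  hence "z \<in> S" using assms by simp
  hence "Inf (ereal ` S) \<le> ereal z" by (simp add: Inf_lower)
  thus False using z by simp
qed

theorem mainTheorem13:
  fixes \<nu> :: "'a::polish_space measure" and \<Omega> :: "'a set"
    and u0 :: "'a \<Rightarrow> real" and u :: "real \<Rightarrow> 'a \<Rightarrow> real"
  assumes "doubling_radon \<nu>"
    and "poincare_11_on \<nu> UNIV"
    and "regular_domain \<nu> \<Omega>"
    and "boundary_regular \<nu> \<Omega>"
    and "boundary_regular \<nu> (- closure \<Omega>)"
    and "\<exists>C>0. \<forall>v \<in> L2 \<nu> \<Omega>. ereal (L2norm \<nu> \<Omega> v) \<le> ereal C * TV0 \<nu> \<Omega> v"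
    and "u0 \<in> L2 \<nu> \<Omega>"
    and "strong_solution \<nu> \<Omega> (TV0 \<nu> \<Omega>) u0 u"
  shows "lambda1 \<nu> \<Omega> > 0 \<and>
         Inf (ereal ` {T. T > 0 \<and> (\<forall>t\<ge>T. L2norm \<nu> \<Omega> (u t) = 0)})
           \<le> ereal (L2norm \<nu> \<Omega> u0) / lambda1 \<nu> \<Omega>"
proof -
  have sets: "sets \<nu> = sets borel" using assms(1) by (simp add: doubling_radon_def)
  have op: "open \<Omega>" using assms(3) by (simp add: regular_domain_def)
  have \<Omega>s: "\<Omega> \<in> sets \<nu>" using sets op by simp
  have uL2: "\<And>t. t \<ge> 0 \<Longrightarrow> u t \<in> L2 \<nu> \<Omega>"
    and ucont: "\<And>t. t \<ge> 0 \<Longrightarrow> ((\<lambda>s. L2norm \<nu> \<Omega> (\<lambda>x. u s x - u t x)) \<longlongrightarrow> 0) (at t within {0..})"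
    and u0: "L2norm \<nu> \<Omega> (\<lambda>x. u 0 x - u0 x) = 0"
    and AC: "\<And>a b. 0 < a \<Longrightarrow> a \<le> b \<Longrightarrow> abs_cont_L2 \<nu> \<Omega> u a b"
    and AEg: "AE t in lborel. t > 0 \<longrightarrow>
        (\<exists>v \<in> L2 \<nu> \<Omega>. has_L2_deriv \<nu> \<Omega> u v t \<and> (\<lambda>x. - v x) \<in> subdiff \<nu> \<Omega> (TV0 \<nu> \<Omega>) (u t))"
    using assms(8) unfolding strong_solution_def by auto
  define \<Lambda> where "\<Lambda> = lambda1 \<nu> \<Omega>"
  have lampos: "\<Lambda> > 0"
  proof -
    obtain C where C: "C > 0" "\<forall>v\<in>L2 \<nu> \<Omega>. ereal (L2norm \<nu> \<Omega> v) \<le> ereal C * TV0 \<nu> \<Omega> v"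
      using assms(6) by blast
    have "ereal (1/C) \<le> \<Lambda>" unfolding \<Lambda>_def lambda1_def
    proof (rule INF_greatest)
      fix v assume v: "v \<in> {v \<in> L2 \<nu> \<Omega>. L2norm \<nu> \<Omega> v \<noteq> 0}"
      have p: "L2norm \<nu> \<Omega> v > 0" using v L2norm_nonneg[of \<nu> \<Omega> v] by simp
      have le: "ereal (L2norm \<nu> \<Omega> v) \<le> ereal C * TV0 \<nu> \<Omega> v" using C v by blast
      show "ereal (1/C) \<le> TV0 \<nu> \<Omega> v / ereal (L2norm \<nu> \<Omega> v)"
      proof (cases "TV0 \<nu> \<Omega> v")
        case (real T)
        hence "L2norm \<nu> \<Omega> v \<le> C * T" using le by simp
        hence "1/C \<le> T / L2norm \<nu> \<Omega> v" using C p by (simp add: field_simps)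
        thus ?thesis using real p by simp
      next
        case PInf
        thus ?thesis using p by simp
      next
        case MInf
        thus ?thesis using le C by simp
      qed
    qed
    moreover have "ereal (1/C) > 0" using C by simp
    ultimately show ?thesis by (metis less_le_trans)
  qed
  have F0: "TV0 \<nu> \<Omega> (\<lambda>x. 0) = 0" by (rule TV0_zero[OF assms(1) op])
  obtain N where N: "N \<in> null_sets lborel" and Nsub: "{t \<in> space lborel. \<not> (t > 0 \<longrightarrow>
        (\<exists>v \<in> L2 \<nu> \<Omega>. has_L2_deriv \<nu> \<Omega> u v t \<and> (\<lambda>x. - v x) \<in> subdiff \<nu> \<Omega> (TV0 \<nu> \<Omega>) (u t)))} \<subseteq> N"
    using AEg unfolding eventually_ae_filter by blast
  have Ngood: "\<exists>v \<in> L2 \<nu> \<Omega>. has_L2_deriv \<nu> \<Omega> u v t \<and> (\<lambda>x. - v x) \<in> subdiff \<nu> \<Omega> (TV0 \<nu> \<Omega>) (u t)"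
    if "t \<notin> N" "t > 0" for t using Nsub that by auto
  define \<phi> where "\<phi> t = L2norm \<nu> \<Omega> (u t)" for t
  have phinn: "\<phi> t \<ge> 0" for t unfolding \<phi>_def by (rule L2norm_nonneg)
  have phi0: "\<phi> 0 = L2norm \<nu> \<Omega> u0"
    using rev_tri[OF \<Omega>s uL2[of 0] assms(7)] u0 unfolding \<phi>_def by simp
  have phicont: "continuous_on {0..} \<phi>"
    unfolding continuous_on_def
  proof
    fix t :: real assume t: "t \<in> {0..}"
    show "(\<phi> \<longlongrightarrow> \<phi> t) (at t within {0..})"
    proof (rule metric_tendsto_imp_tendsto[OF ucont])
      show "0 \<le> t" using t by simp
      have "eventually (\<lambda>s. s \<in> {0..}) (at t within {0..})" by (simp add: eventually_at_filter)
      thus "\<forall>\<^sub>F s in at t within {0..}. dist (\<phi> s) (\<phi> t) \<le> dist (L2norm \<nu> \<Omega> (\<lambda>x. u s x - u t x)) 0"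
      proof eventually_elim
        case (elim s)
        thus ?case using rev_tri[OF \<Omega>s uL2[of s] uL2[of t]] t L2norm_nonneg
          unfolding \<phi>_def by (simp add: dist_real_def)
      qed
    qed
  qed
  have gcont: "continuous_on {a..b} (\<lambda>s. \<phi> s + lam' * s)" if "a \<ge> 0" for a b lam'
  proof -
    have "continuous_on {a..b} \<phi>" using phicont by (rule continuous_on_subset) (use that in auto)
    thus ?thesis by (intro continuous_intros)
  qed
  have gAC: "ACg (\<lambda>s. \<phi> s + lam' * s) a b" if "0 < a" "a \<le> b" "lam' \<ge> 0" for a b lam'
    unfolding ACg_def
  proof (intro allI impI)
    fix \<epsilon> :: real assume \<epsilon>: "\<epsilon> > 0"
    have "\<exists>\<delta>>0. \<forall>(n::nat) aa bb.
      (\<forall>i<n. a \<le> aa i \<and> aa i \<le> bb i \<and> bb i \<le> b) \<and>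
      (\<forall>i<n. \<forall>j<n. i \<noteq> j \<longrightarrow> bb i \<le> aa j \<or> bb j \<le> aa i) \<and>
      (\<Sum>i<n. bb i - aa i) < \<delta> \<longrightarrow>
      (\<Sum>i<n. L2norm \<nu> \<Omega> (\<lambda>x. u (bb i) x - u (aa i) x)) < \<epsilon>/2"
    proof -
      have h: "\<epsilon>/2 > 0" using \<epsilon> by simp
      show ?thesis using mp[OF spec[OF AC[OF that(1,2), unfolded abs_cont_L2_def]] h] .
    qed
    then obtain \<delta>1 where \<delta>1: "\<delta>1 > 0" and H: "\<forall>(n::nat) aa bb.
      (\<forall>i<n. a \<le> aa i \<and> aa i \<le> bb i \<and> bb i \<le> b) \<and>
      (\<forall>i<n. \<forall>j<n. i \<noteq> j \<longrightarrow> bb i \<le> aa j \<or> bb j \<le> aa i) \<and>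
      (\<Sum>i<n. bb i - aa i) < \<delta>1 \<longrightarrow>
      (\<Sum>i<n. L2norm \<nu> \<Omega> (\<lambda>x. u (bb i) x - u (aa i) x)) < \<epsilon>/2" by (elim exE conjE)
    define \<delta> where "\<delta> = min \<delta>1 (\<epsilon> / (2 * (lam' + 1)))"
    have \<delta>: "\<delta> > 0" unfolding \<delta>_def using \<delta>1 \<epsilon> that(3) by simp
    show "\<exists>\<delta>>0. \<forall>(n::nat) aa bb.
      (\<forall>i<n. a \<le> aa i \<and> aa i \<le> bb i \<and> bb i \<le> b) \<and>
      (\<forall>i<n. \<forall>j<n. i \<noteq> j \<longrightarrow> bb i \<le> aa j \<or> bb j \<le> aa i) \<and>
      (\<Sum>i<n. bb i - aa i) < \<delta> \<longrightarrow>
      (\<Sum>i<n. \<bar>(\<phi> (bb i) + lam' * bb i) - (\<phi> (aa i) + lam' * aa i)\<bar>) < \<epsilon>"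
    proof (intro exI[of _ \<delta>] conjI allI impI \<delta>)
      fix n :: nat and aa bb :: "nat \<Rightarrow> real"
      assume A: "(\<forall>i<n. a \<le> aa i \<and> aa i \<le> bb i \<and> bb i \<le> b) \<and>
      (\<forall>i<n. \<forall>j<n. i \<noteq> j \<longrightarrow> bb i \<le> aa j \<or> bb j \<le> aa i) \<and>
      (\<Sum>i<n. bb i - aa i) < \<delta>"
      have s1: "(\<Sum>i<n. L2norm \<nu> \<Omega> (\<lambda>x. u (bb i) x - u (aa i) x)) < \<epsilon>/2"
        using H A unfolding \<delta>_def by auto
      have "(\<Sum>i<n. \<bar>(\<phi> (bb i) + lam' * bb i) - (\<phi> (aa i) + lam' * aa i)\<bar>)
          \<le> (\<Sum>i<n. L2norm \<nu> \<Omega> (\<lambda>x. u (bb i) x - u (aa i) x) + lam' * (bb i - aa i))"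
      proof (rule sum_mono)
        fix i assume "i \<in> {..<n}"
        hence i: "a \<le> aa i" "aa i \<le> bb i" using A by auto
        have "\<bar>\<phi> (bb i) - \<phi> (aa i)\<bar> \<le> L2norm \<nu> \<Omega> (\<lambda>x. u (bb i) x - u (aa i) x)"
          unfolding \<phi>_def by (rule rev_tri[OF \<Omega>s uL2 uL2]) (use i that in auto)
        moreover have "lam' * (bb i - aa i) \<ge> 0" using i that by simp
        ultimately show "\<bar>(\<phi> (bb i) + lam' * bb i) - (\<phi> (aa i) + lam' * aa i)\<bar>
            \<le> L2norm \<nu> \<Omega> (\<lambda>x. u (bb i) x - u (aa i) x) + lam' * (bb i - aa i)"
          by (simp add: algebra_simps abs_le_iff) linarith
      qed
      also have "\<dots> = (\<Sum>i<n. L2norm \<nu> \<Omega> (\<lambda>x. u (bb i) x - u (aa i) x)) + lam' * (\<Sum>i<n. bb i - aa i)"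
        by (simp add: sum.distrib sum_distrib_left)
      also have "lam' * (\<Sum>i<n. bb i - aa i) \<le> \<epsilon>/2"
      proof -
        have "(\<Sum>i<n. bb i - aa i) \<le> \<epsilon> / (2 * (lam' + 1))" using A unfolding \<delta>_def by simp
        hence "lam' * (\<Sum>i<n. bb i - aa i) \<le> lam' * (\<epsilon> / (2 * (lam' + 1)))"
          using that(3) by (intro mult_left_mono)
        also have "\<dots> \<le> \<epsilon>/2" using that(3) \<epsilon> by (simp add: field_simps)
        finally show ?thesis .
      qed
      finally show "(\<Sum>i<n. \<bar>(\<phi> (bb i) + lam' * bb i) - (\<phi> (aa i) + lam' * aa i)\<bar>) < \<epsilon>"
        using s1 by linarith
    qed
  qed
  have GP: "\<exists>s. t < s \<and> s < t + \<eta> \<and> \<phi> s + lam' * s < \<phi> t + lam' * t"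
    if lam: "0 < lam" "ereal lam \<le> \<Lambda>" "lam' < lam" and t: "t > 0" "t \<notin> N" "\<phi> t > 0" and eta: "\<eta> > 0"
    for lam lam' t \<eta>
  proof -
    obtain v where v: "v \<in> L2 \<nu> \<Omega>" and hd: "has_L2_deriv \<nu> \<Omega> u v t"
      and sd: "(\<lambda>x. - v x) \<in> subdiff \<nu> \<Omega> (TV0 \<nu> \<Omega>) (u t)"
      using Ngood[OF t(2) t(1)] by blast
    have ut: "u t \<in> L2 \<nu> \<Omega>" using uL2 t by simp
    have fin: "TV0 \<nu> \<Omega> (u t) \<noteq> \<infinity>" "TV0 \<nu> \<Omega> (u t) \<noteq> - \<infinity>"
      and ineq: "\<forall>w \<in> L2 \<nu> \<Omega>. TV0 \<nu> \<Omega> (u t) + ereal (L2inner \<nu> \<Omega> (\<lambda>x. - v x) (\<lambda>x. w x - u t x)) \<le> TV0 \<nu> \<Omega> w"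
      using sd unfolding subdiff_def by auto
    have z: "(\<lambda>x. 0::real) \<in> L2 \<nu> \<Omega>" unfolding L2_def by simp
    have "TV0 \<nu> \<Omega> (u t) + ereal (L2inner \<nu> \<Omega> (\<lambda>x. - v x) (\<lambda>x. 0 - u t x)) \<le> 0"
      using ineq z F0 by force
    moreover have "L2inner \<nu> \<Omega> (\<lambda>x. - v x) (\<lambda>x. 0 - u t x) = L2inner \<nu> \<Omega> v (u t)"
      unfolding L2inner_def by simp
    moreover obtain Ft where Ft: "TV0 \<nu> \<Omega> (u t) = ereal Ft" using fin by (cases "TV0 \<nu> \<Omega> (u t)") auto
    ultimately have ip1: "Ft + L2inner \<nu> \<Omega> v (u t) \<le> 0" by simp
    have "\<Lambda> \<le> TV0 \<nu> \<Omega> (u t) / ereal (L2norm \<nu> \<Omega> (u t))"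
      unfolding \<Lambda>_def lambda1_def by (rule INF_lower) (use ut t in \<open>auto simp: \<phi>_def\<close>)
    hence "\<Lambda> \<le> ereal (Ft / \<phi> t)" using Ft t(3) unfolding \<phi>_def by simp
    hence "ereal lam \<le> ereal (Ft / \<phi> t)" using lam(2) by (rule order_trans[rotated])
    hence "lam \<le> Ft / \<phi> t" by simp
    hence "lam * \<phi> t \<le> Ft" using t(3) by (simp add: field_simps)
    hence ip: "L2inner \<nu> \<Omega> v (u t) \<le> - lam * L2norm \<nu> \<Omega> (u t)" using ip1 unfolding \<phi>_def by simp
    have D: "((\<lambda>h. L2norm \<nu> \<Omega> (\<lambda>x. (u (t + h) x - u t x) / h - v x)) \<longlongrightarrow> 0) (at 0)"
      using hd unfolding has_L2_deriv_def .
    obtain h where h: "0 < h" "h < \<eta>" "L2norm \<nu> \<Omega> (u (t + h)) + lam' * h < L2norm \<nu> \<Omega> (u t)"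
      using dini_step[OF \<Omega>s ut v, of "\<lambda>h. u (t + h)" lam lam' \<eta>] uL2 t lam ip D eta
      unfolding \<phi>_def by force
    show ?thesis using h unfolding \<phi>_def by (intro exI[of _ "t + h"]) (auto simp: algebra_simps)
  qed
  have RAapp: "\<phi> b + lam' * b \<le> \<phi> a + lam' * a"
    if lam: "0 < lam" "ereal lam \<le> \<Lambda>" "0 \<le> lam'" "lam' < lam" and ab: "0 < a" "a < b"
      and pos: "\<forall>t\<in>{a..b}. \<phi> t > 0" for lam lam' a b
  proof (rule descent_mono[OF ab(2) gcont gAC N])
    fix t \<eta> :: real assume "t \<in> {a..<b}" "t \<notin> N" "\<eta> > 0"
    thus "\<exists>s>t. s < t + \<eta> \<and> \<phi> s + lam' * s < \<phi> t + lam' * t"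
      using GP[OF lam(1,2,4)] pos ab by auto
  qed (use ab lam in auto)
  have KEY: "\<phi> t = 0" if lam: "0 < lam" "ereal lam \<le> \<Lambda>" and T: "T > 0" "lam * T > L2norm \<nu> \<Omega> u0"
    and tT: "t \<ge> T" for lam T t
  proof -
    define lam' where "lam' = lam / 2"
    have l': "0 \<le> lam'" "lam' < lam" using lam unfolding lam'_def by auto
    have Zp: "\<phi> t' = 0" if s: "s \<ge> 0" "\<phi> s = 0" "t' > s" for s t'
    proof (rule ccontr)
      assume "\<phi> t' \<noteq> 0"
      hence pt: "\<phi> t' > 0" using phinn[of t'] by simp
      define Zs where "Zs = {s..t'} \<inter> \<phi> -` {0}"
      have cs: "continuous_on {s..t'} \<phi>" using phicont by (rule continuous_on_subset) (use s in auto)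
      have clZ: "closed Zs" unfolding Zs_def by (rule continuous_closed_preimage[OF cs]) auto
      have sZ: "s \<in> Zs" using s unfolding Zs_def by auto
      have bdd: "bdd_above Zs" unfolding Zs_def by (auto intro: bdd_aboveI[of _ t'])
      define s' where "s' = Sup Zs"
      have s'Z: "s' \<in> Zs" unfolding s'_def using closed_contains_Sup[OF _ bdd clZ] sZ by blast
      have ub: "\<And>x. x \<in> Zs \<Longrightarrow> x \<le> s'" unfolding s'_def using bdd by (simp add: cSup_upper)
      have s'p: "s \<le> s'" "s' \<le> t'" "\<phi> s' = 0" using s'Z unfolding Zs_def by auto
      have s't: "s' < t'" using s'p pt by (metis order.not_eq_order_implies_strict less_irrefl)
      have posr: "\<phi> r > 0" if "s' < r" "r \<le> t'" for r
      proof (rule ccontr)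
        assume "\<not> \<phi> r > 0"
        hence "\<phi> r = 0" using phinn[of r] by simp
        hence "r \<in> Zs" using that s'p unfolding Zs_def by auto
        thus False using ub that by force
      qed
      obtain d where d: "d > 0" "\<And>x'. x' \<in> {0..} \<Longrightarrow> dist x' s' < d \<Longrightarrow> dist (\<phi> x') (\<phi> s') < \<phi> t'"
        using phicont pt s'p s unfolding continuous_on_iff by (metis atLeast_iff order.trans)
      define a where "a = s' + min d (t' - s') / 2"
      have a: "s' < a" "a < t'" using d(1) s't unfolding a_def by (auto simp: min_def field_simps)
      have "dist a s' < d" using d s't unfolding a_def dist_real_def by auto
      hence "dist (\<phi> a) (\<phi> s') < \<phi> t'" using d a s'p s by auto
      hence pa: "\<phi> a < \<phi> t'" using s'p by (simp add: dist_real_def)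
      have "\<phi> t' + lam' * t' \<le> \<phi> a + lam' * a"
        by (rule RAapp[OF lam l']) (use a s'p s posr in auto)
      moreover have "lam' * a \<le> lam' * t'" using a l' by (simp add: mult_left_mono)
      ultimately show False using pa by linarith
    qed
    have PT: "\<phi> T = 0"
    proof (rule ccontr)
      assume "\<phi> T \<noteq> 0"
      hence pT: "\<phi> T > 0" using phinn[of T] by simp
      have allpos: "\<phi> r > 0" if "0 \<le> r" "r \<le> T" for r
      proof (rule ccontr)
        assume "\<not> \<phi> r > 0"
        hence "\<phi> r = 0" using phinn[of r] by simp
        hence "r = T \<or> \<phi> T = 0" using Zp[of r T] that by fastforce
        thus False using pT \<open>\<phi> r = 0\<close> by auto
      qed
      define l2 where "l2 = (lam + L2norm \<nu> \<Omega> u0 / T) / 2"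
      have l2: "0 \<le> l2" "l2 < lam" "l2 * T > L2norm \<nu> \<Omega> u0"
      proof -
        have q: "L2norm \<nu> \<Omega> u0 / T < lam" using T by (simp add: field_simps)
        show "0 \<le> l2" unfolding l2_def using lam T L2norm_nonneg[of \<nu> \<Omega> u0] by simp
        show "l2 < lam" unfolding l2_def using q by simp
        have "l2 * T = (lam * T + L2norm \<nu> \<Omega> u0) / 2" unfolding l2_def using T by (simp add: field_simps)
        thus "l2 * T > L2norm \<nu> \<Omega> u0" using T(2) by simp
      qed
      define e where "e = (l2 * T - L2norm \<nu> \<Omega> u0) / 2"
      have e: "e > 0" using l2 unfolding e_def by simp
      obtain d where d: "d > 0" "\<And>x'. x' \<in> {0..} \<Longrightarrow> dist x' 0 < d \<Longrightarrow> dist (\<phi> x') (\<phi> 0) < e/2"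
        using phicont e unfolding continuous_on_iff by (metis atLeast_iff order_refl half_gt_zero)
      define a where "a = min (min d T) (e / (2 * (l2 + 1))) / 2"
      define m where "m = min (min d T) (e / (2 * (l2 + 1)))"
      have m: "m > 0" "m \<le> d" "m \<le> T" "m \<le> e / (2 * (l2 + 1))"
        unfolding m_def using d T e l2 by auto
      have a: "0 < a" "a < T" "a < d" "a \<le> e / (2 * (l2 + 1))"
      proof -
        have am: "a = m / 2" unfolding a_def m_def by simp
        have "a \<le> m" "0 < a" using m unfolding am by auto
        thus "0 < a" "a < T" "a < d" "a \<le> e / (2 * (l2 + 1))" using m unfolding am by linarith+
      qed
      have "dist (\<phi> a) (\<phi> 0) < e/2" using d a by (simp add: dist_real_def)
      hence "\<bar>\<phi> a - L2norm \<nu> \<Omega> u0\<bar> < e/2" using phi0 by (simp add: dist_real_def)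
      hence pa: "\<phi> a < L2norm \<nu> \<Omega> u0 + e/2" by arith
      have la: "l2 * a \<le> e/2"
      proof -
        have "l2 * a \<le> l2 * (e / (2 * (l2 + 1)))" using a(4) l2(1) by (rule mult_left_mono)
        also have "\<dots> \<le> e/2" using l2 e by (simp add: field_simps)
        finally show ?thesis .
      qed
      have "\<phi> T + l2 * T \<le> \<phi> a + l2 * a"
        by (rule RAapp[OF lam l2(1,2)]) (use a allpos in auto)
      hence "l2 * T < L2norm \<nu> \<Omega> u0 + e" using pa la pT by linarith
      thus False using l2(3) unfolding e_def by (simp add: field_simps)
    qed
    show ?thesis
    proof (cases "t = T")
      case True thus ?thesis using PT by simp
    next
      case False thus ?thesis using Zp[of T t] PT T tT by simp
    qed
  qed
  define S where "S = {T. T > 0 \<and> (\<forall>t\<ge>T. L2norm \<nu> \<Omega> (u t) = 0)}"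
  have main: "Inf (ereal ` S) \<le> ereal (L2norm \<nu> \<Omega> u0) / \<Lambda>"
  proof (cases \<Lambda>)
    case (real L)
    hence L: "L > 0" using lampos by simp
    have "Inf (ereal ` S) \<le> ereal (L2norm \<nu> \<Omega> u0 / L)"
    proof (rule inf_bound)
      fix T assume T: "T > L2norm \<nu> \<Omega> u0 / L"
      have T0: "T > 0" using T L L2norm_nonneg[of \<nu> \<Omega> u0] by (meson divide_nonneg_pos le_less_trans)
      have "L * T > L2norm \<nu> \<Omega> u0" using T L by (simp add: field_simps)
      thus "T \<in> S" unfolding S_def using KEY[of L T] L real T0 unfolding \<phi>_def by auto
    qed
    thus ?thesis using real L by simp
  next
    case PInf
    have "Inf (ereal ` S) \<le> ereal 0"
    proof (rule inf_bound)
      fix T :: real assume T: "T > 0"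
      define lam where "lam = (L2norm \<nu> \<Omega> u0 + 1) / T"
      have lam: "lam > 0" unfolding lam_def using T L2norm_nonneg[of \<nu> \<Omega> u0] by simp
      have "lam * T > L2norm \<nu> \<Omega> u0" unfolding lam_def using T by simp
      thus "T \<in> S" unfolding S_def using KEY[of lam T] lam PInf T unfolding \<phi>_def by auto
    qed
    thus ?thesis using PInf by (simp add: zero_ereal_def)
  next
    case MInf thus ?thesis using lampos by simp
  qed
  show ?thesis using lampos main unfolding \<Lambda>_def S_def by simp
qed

end
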